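(* Let $m\ge 2$ be an integer and $a>0$. Let $\mathcal{H}_\infty$ be the $m$-order infinite dimensional generalized Hilbert tensor with entries $\mathcal{H}_{i_1\cdots i_m}=\frac{1}{i_1+\cdots+i_m-m+a}$, $i_1,\dots,i_m\in\{1,2,\dots\}$, and for $x\in l^1$ let $\mathcal{H}_\infty x^{m-1}$ be the infinite vector with components $$(\mathcal{H}_\infty x^{m-1})_i=\sum_{i_2,\dots,i_m=1}^\infty\frac{x_{i_2}\cdots x_{i_m}}{i+i_2+\cdots+i_m-m+a},\quad i=1,2,\dots.$$ Define $$T_\infty x=\begin{cases}\|x\|_{l^1}^{2-m}\,\mathcal{H}_\infty x^{m-1}, & x\neq\theta,\\ \theta, & x=\theta,\end{cases}$$ and, when $m$ is even, $F_\infty x=(\mathcal{H}_\infty x^{m-1})^{[\frac{1}{m-1}]}$, where $y^{[\frac1{m-1}]}=(y_1^{\frac1{m-1}},y_2^{\frac1{m-1}},\dots)$ (real $(m-1)$-th roots, $m-1$ odd) and $\theta=(0,0,\dots)$. (i) Suppose $m$ is even. If $x\in l^1$, then $F_\infty x\in l^p$ for every $m-1<p<\infty$. Moreover, $F_\infty$ is a bounded, continuous and positively homogeneous operator from $l^1$ into $l^p$ ($m-1<p<\infty$). In particular, $$\|F_\infty\|=\sup_{\|x\|_{l^1}=1}\|F_\infty x\|_{l^{2(m-1)}}\le K(a),\qquad K(a)=\begin{cases}\left(\frac{1}{a^2}+\frac{\pi^2}{6}\right)^{\frac{1}{2(m-1)}}, & 0<a<1,\\ \left(\frac{\pi^2}{6}\right)^{\frac{1}{2(m-1)}},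 & a\ge 1.\end{cases}$$ (ii) If $x\in l^1$, then $T_\infty x\in l^p$ for every $1<p<\infty$. Moreover, $T_\infty$ is a bounded, continuous and positively homogeneous operator from $l^1$ into $l^p$ ($1<p<\infty$). In particular, $$\|T_\infty\|=\sup_{\|x\|_{l^1}=1}\|T_\infty x\|_{l^2}\le C(a),\qquad C(a)=\begin{cases}\sqrt{\frac{1}{a^2}+\frac{\pi^2}{6}}, & 0<a<1,\\ \frac{\pi}{\sqrt6}, & a\ge1.\end{cases}$$
   Context: For $p\ge1$, $l^p$ is the space of real sequences $x=(x_i)_{i=1}^\infty$ with $\|x\|_{l^p}=(\sum_{i=1}^\infty|x_i|^p)^{1/p}<\infty$. For real Banach spaces $X,Y$, an operator $T:X\to Y$ is positively homogeneous if $T(tx)=tT(x)$ for all $t>0$, $x\in X$; it is bounded if there is $M>0$ with $\|Tx\|_Y\le M\|x\|_X$ for all $x\in X$. For a bounded, continuous, positively homogeneous $T$, its norm is $\|T\|=\sup\{\|Tx\|_Y:\|x\|_X=1\}$. *)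

theory Defs
  imports "HOL-Analysis.Analysis"
begin

text \<open>Real sequences are functions nat \<Rightarrow> real; index k here corresponds to index k+1 in the paper.\<close>

definition lp_mem :: "real \<Rightarrow> (nat \<Rightarrow> real) \<Rightarrow> bool" where
  "lp_mem p x \<longleftrightarrow> summable (\<lambda>i. \<bar>x i\<bar> powr p)"

definition lp_norm :: "real \<Rightarrow> (nat \<Rightarrow> real) \<Rightarrow> real" where
  "lp_norm p x = (\<Sum>i. \<bar>x i\<bar> powr p) powr (1 / p)"

text \<open>(H x^{m-1})_i, with 0-based indices: the paper's denominator
  i+i_2+...+i_m-m+a becomes i+j_1+...+j_{m-1}+a for 0-based i, j_k.\<close>
definition Hinf :: "nat \<Rightarrow> real \<Rightarrow> (nat \<Rightarrow> real) \<Rightarrow> nat \<Rightarrow> real" where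
  "Hinf m a x i = (\<Sum>\<^sub>\<infinity> j \<in> PiE {..<m-1} (\<lambda>_. UNIV).
      (\<Prod>k<m-1. x (j k)) / (real i + (\<Sum>k<m-1. real (j k)) + a))"

definition Tinf :: "nat \<Rightarrow> real \<Rightarrow> (nat \<Rightarrow> real) \<Rightarrow> nat \<Rightarrow> real" where
  "Tinf m a x = (if x = (\<lambda>_. 0) then (\<lambda>_. 0)
     else (\<lambda>i. lp_norm 1 x powr (2 - real m) * Hinf m a x i))"

definition Finf :: "nat \<Rightarrow> real \<Rightarrow> (nat \<Rightarrow> real) \<Rightarrow> nat \<Rightarrow> real" where
  "Finf m a x = (\<lambda>i. root (m - 1) (Hinf m a x i))"

definition bounded_op_l1_lp :: "real \<Rightarrow> ((nat \<Rightarrow> real) \<Rightarrow> nat \<Rightarrow> real) \<Rightarrow> bool" where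
  "bounded_op_l1_lp p T \<longleftrightarrow> (\<exists>M>0. \<forall>x. lp_mem 1 x \<longrightarrow> lp_norm p (T x) \<le> M * lp_norm 1 x)"

definition continuous_op_l1_lp :: "real \<Rightarrow> ((nat \<Rightarrow> real) \<Rightarrow> nat \<Rightarrow> real) \<Rightarrow> bool" where
  "continuous_op_l1_lp p T \<longleftrightarrow> (\<forall>x. lp_mem 1 x \<longrightarrow> (\<forall>e>0. \<exists>d>0. \<forall>y. lp_mem 1 y \<longrightarrow>
      lp_norm 1 (y - x) < d \<longrightarrow> lp_norm p (T y - T x) < e))"

definition pos_homogeneous_on_l1 :: "((nat \<Rightarrow> real) \<Rightarrow> nat \<Rightarrow> real) \<Rightarrow> bool" where
  "pos_homogeneous_on_l1 T \<longleftrightarrow> (\<forall>t>0. \<forall>x. lp_mem 1 x \<longrightarrow> T (\<lambda>i. t * x i) = (\<lambda>i. t * T x i))"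

definition Kconst :: "nat \<Rightarrow> real \<Rightarrow> real" where
  "Kconst m a = (if a < 1 then (1 / a\<^sup>2 + pi\<^sup>2 / 6) powr (1 / (2 * (real m - 1)))
                 else (pi\<^sup>2 / 6) powr (1 / (2 * (real m - 1))))"

definition Cconst :: "real \<Rightarrow> real" where
  "Cconst a = (if a < 1 then sqrt (1 / a\<^sup>2 + pi\<^sup>2 / 6) else pi / sqrt 6)"

end

theory Submission
  imports Defs
begin


lemma has_sum_PiE_prod:
  fixes w :: "nat \<Rightarrow> nat \<Rightarrow> real"
  assumes nn: "\<And>k i. k < n \<Longrightarrow> w k i \<ge> 0" and sm: "\<And>k. k < n \<Longrightarrow> summable (w k)"
  shows "((\<lambda>j. \<Prod>k<n. w k (j k)) has_sum (\<Prod>k<n. suminf (w k))) (PiE {..<n} (\<lambda>_. UNIV))"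
proof -
  have hs: "(w k has_sum suminf (w k)) UNIV" if "k < n" for k
    using sums_nonneg_imp_has_sum[OF summable_sums[OF sm[OF that]]] nn[OF that] by blast
  have abs1: "(\<lambda>i. norm (w k i)) summable_on UNIV" if "k < n" for k
  proof -
    have "(\<lambda>i. norm (w k i)) = w k" using nn[OF that] by (auto simp: fun_eq_iff)
    then show ?thesis using hs[OF that] by (auto simp: summable_on_def)
  qed
  have "Infinite_Set_Sum.abs_summable_on (w k) UNIV" if "k \<in> {..<n}" for k
    using abs1[of k] that abs_summable_equivalent[of "w k" UNIV] by simp
  then have "Infinite_Set_Sum.abs_summable_on (\<lambda>j. \<Prod>k\<in>{..<n}. w k (j k)) (PiE {..<n} (\<lambda>_. UNIV))"
    by (intro abs_summable_on_prod_PiE) auto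
  then have "(\<lambda>j. norm (\<Prod>k\<in>{..<n}. w k (j k))) summable_on (PiE {..<n} (\<lambda>_. UNIV))"
    using abs_summable_equivalent[of "\<lambda>j. \<Prod>k\<in>{..<n}. w k (j k)" "PiE {..<n} (\<lambda>_. UNIV)"] by simp
  then have s: "(\<lambda>j. \<Prod>k\<in>{..<n}. w k (j k)) summable_on (PiE {..<n} (\<lambda>_. UNIV))"
    by (metis summable_on_iff_abs_summable_on_real)
  have "infsum (\<lambda>j. \<Prod>k\<in>{..<n}. w k (j k)) (PiE {..<n} (\<lambda>_. UNIV)) = (\<Prod>k\<in>{..<n}. infsum (w k) UNIV)"
    by (rule infsum_prod_PiE_abs) (use abs1 in auto)
  also have "\<dots> = (\<Prod>k<n. suminf (w k))"
    by (intro prod.cong refl) (use hs in \<open>auto simp: infsumI\<close>)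
  finally show ?thesis using s has_sum_iff by blast
qed

lemma l1_iff: "lp_mem 1 x \<longleftrightarrow> summable (\<lambda>i. \<bar>x i\<bar>)"
  by (simp add: lp_mem_def)

lemma l1_norm: "lp_mem 1 x \<Longrightarrow> lp_norm 1 x = (\<Sum>i. \<bar>x i\<bar>)"
  by (simp add: lp_norm_def l1_iff suminf_nonneg)

lemma den_ge:
  fixes j :: "nat \<Rightarrow> nat"
  shows "real i + a \<le> real i + (\<Sum>k<n. real (j k)) + a"
  by (simp add: sum_nonneg)

lemma Hfam:
  fixes x :: "nat \<Rightarrow> real" and n i :: nat
  assumes a: "a > 0" and x: "lp_mem 1 x"
  defines "g \<equiv> (\<lambda>j. (\<Prod>k<n. x (j k)) / (real i + (\<Sum>k<n. real (j k)) + a))"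
  shows "(\<lambda>j. norm (g j)) summable_on PiE {..<n} (\<lambda>_. UNIV)"
    and "\<bar>infsum g (PiE {..<n} (\<lambda>_. UNIV))\<bar> \<le> lp_norm 1 x ^ n / (real i + a)"
proof -
  let ?J = "PiE {..<n} (\<lambda>_::nat. UNIV::nat set)"
  have P: "((\<lambda>j. \<Prod>k<n. \<bar>x (j k)\<bar>) has_sum (\<Prod>k<n. (\<Sum>i. \<bar>x i\<bar>))) ?J"
    using has_sum_PiE_prod[where n=n and w="\<lambda>_ i. \<bar>x i\<bar>"] x by (simp add: l1_iff)
  have P2: "((\<lambda>j. (\<Prod>k<n. \<bar>x (j k)\<bar>) / (real i + a)) has_sum (lp_norm 1 x ^ n / (real i + a))) ?J"
    using has_sum_cmult_left[OF P, of "inverse (real i + a)"] x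
    by (simp add: l1_norm divide_inverse)
  have le: "norm (g j) \<le> norm ((\<Prod>k<n. \<bar>x (j k)\<bar>) / (real i + a))" for j
  proof -
    have d: "0 < real i + a" "real i + a \<le> real i + (\<Sum>k<n. real (j k)) + a"
      using a den_ge[where i=i and a=a and n=n and j=j] by auto
    have "norm (g j) = (\<Prod>k<n. \<bar>x (j k)\<bar>) / (real i + (\<Sum>k<n. real (j k)) + a)"
      using d by (simp add: g_def abs_prod)
    also have "\<dots> \<le> (\<Prod>k<n. \<bar>x (j k)\<bar>) / (real i + a)"
      using d by (intro divide_left_mono) (auto simp: prod_nonneg)
    finally show ?thesis using d by (simp add: prod_nonneg)
  qed
  have P2s: "(\<lambda>j. norm ((\<Prod>k<n. \<bar>x (j k)\<bar>) / (real i + a))) summable_on ?J"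
    using P2 a by (simp add: prod_nonneg summable_on_def abs_prod) (metis abs_prod abs_abs)
  show sg: "(\<lambda>j. norm (g j)) summable_on ?J"
    by (rule Infinite_Sum.abs_summable_on_comparison_test[OF P2s]) (use le in auto)
  have "\<bar>infsum g ?J\<bar> \<le> infsum (\<lambda>j. norm (g j)) ?J"
    using norm_infsum_bound[OF sg] by simp
  also have "\<dots> \<le> infsum (\<lambda>j. (\<Prod>k<n. \<bar>x (j k)\<bar>) / (real i + a)) ?J"
    by (rule infsum_mono[OF sg]) (use P2 le a in \<open>auto simp: summable_on_def prod_nonneg\<close>)
  also have "\<dots> = lp_norm 1 x ^ n / (real i + a)"
    using P2 infsumI by blast
  finally show "\<bar>infsum g ?J\<bar> \<le> lp_norm 1 x ^ n / (real i + a)" .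
qed

lemma tele:
  fixes a b :: "nat \<Rightarrow> real"
  shows "\<bar>(\<Prod>k<n. b k) - (\<Prod>k<n. a k)\<bar> \<le>
    (\<Sum>l<n. \<Prod>k<n. (if k < l then \<bar>a k\<bar> else if k = l then \<bar>b k - a k\<bar> else \<bar>b k\<bar>))"
proof (induction n)
  case 0
  then show ?case by simp
next
  case (Suc n)
  let ?c = "\<lambda>l k. (if k < l then \<bar>a k\<bar> else if k = l then \<bar>b k - a k\<bar> else \<bar>b k\<bar>)"
  have e1: "(\<Prod>k<Suc n. ?c l k) = \<bar>b n\<bar> * (\<Prod>k<n. ?c l k)" if "l < n" for l
    using that by (simp add: mult.commute)
  have e2: "(\<Prod>k<Suc n. ?c n k) = \<bar>b n - a n\<bar> * \<bar>\<Prod>k<n. a k\<bar>"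
    by (simp add: abs_prod mult.commute)
  have "\<bar>(\<Prod>k<Suc n. b k) - (\<Prod>k<Suc n. a k)\<bar>
      = \<bar>b n * ((\<Prod>k<n. b k) - (\<Prod>k<n. a k)) + (b n - a n) * (\<Prod>k<n. a k)\<bar>"
    by (simp add: algebra_simps)
  also have "\<dots> \<le> \<bar>b n\<bar> * \<bar>(\<Prod>k<n. b k) - (\<Prod>k<n. a k)\<bar> + \<bar>b n - a n\<bar> * \<bar>\<Prod>k<n. a k\<bar>"
    by (metis abs_mult abs_triangle_ineq)
  also have "\<dots> \<le> \<bar>b n\<bar> * (\<Sum>l<n. \<Prod>k<n. ?c l k) + \<bar>b n - a n\<bar> * \<bar>\<Prod>k<n. a k\<bar>"
    using Suc.IH by (intro add_right_mono mult_left_mono) auto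
  also have "\<dots> = (\<Sum>l<n. \<Prod>k<Suc n. ?c l k) + (\<Prod>k<Suc n. ?c n k)"
  proof -
    have "(\<Sum>l<n. \<Prod>k<Suc n. ?c l k) = (\<Sum>l<n. \<bar>b n\<bar> * (\<Prod>k<n. ?c l k))"
      by (rule sum.cong[OF refl], rule e1, simp)
    then show ?thesis by (simp only: e2 sum_distrib_left)
  qed
  also have "\<dots> = (\<Sum>l<Suc n. \<Prod>k<Suc n. ?c l k)"
    by simp
  finally show ?case .
qed

lemma lp_norm_nonneg: "0 \<le> lp_norm p z"
  by (simp add: lp_norm_def)

lemma has_sum_diff':
  fixes f g :: "'a \<Rightarrow> real"
  assumes "(f has_sum a) A" "(g has_sum b) A"
  shows "((\<lambda>x. f x - g x) has_sum (a - b)) A"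
  using has_sum_add[OF assms(1) has_sum_uminusI[OF assms(2)]] by simp

lemma has_sum_sum_fin:
  fixes f :: "'b \<Rightarrow> 'a \<Rightarrow> real"
  assumes "finite L" "\<And>l. l \<in> L \<Longrightarrow> (f l has_sum s l) A"
  shows "((\<lambda>x. \<Sum>l\<in>L. f l x) has_sum (\<Sum>l\<in>L. s l)) A"
  using assms
proof (induction L rule: finite_induct)
  case empty
  then show ?case by simp
next
  case (insert l L)
  then show ?case by (simp add: has_sum_add)
qed

lemma prod_if_bound:
  fixes D R :: real and l n :: nat
  assumes "l < n"
  shows "(\<Prod>k<n. (if k = l then D else R)) = D * R ^ (n - 1)"
proof -
  have "(\<Prod>k<n. (if k = l then D else R)) = (if l = l then D else R) * (\<Prod>k\<in>{..<n} - {l}. (if k = l then D else R))"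
    by (rule prod.remove) (use assms in auto)
  also have "(\<Prod>k\<in>{..<n} - {l}. (if k = l then D else R)) = (\<Prod>k\<in>{..<n} - {l}. R)"
    by (intro prod.cong) auto
  also have "\<dots> = R ^ (n - 1)"
    using assms by (simp only: prod_constant card_Diff_singleton lessThan_iff card_lessThan finite_lessThan)
  finally show ?thesis by simp
qed

lemma Hdiff:
  fixes x y :: "nat \<Rightarrow> real" and n i :: nat and R :: real
  assumes a: "a > 0" and x: "lp_mem 1 x" and y: "lp_mem 1 y"
    and Rx: "lp_norm 1 x \<le> R" and Ry: "lp_norm 1 y \<le> R"
  defines "g \<equiv> (\<lambda>z j. (\<Prod>k<n. z (j k)) / (real i + (\<Sum>k<n. real (j k)) + a))"
  shows "\<bar>infsum (g y) (PiE {..<n} (\<lambda>_. UNIV)) - infsum (g x) (PiE {..<n} (\<lambda>_. UNIV))\<bar>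
     \<le> real n * R ^ (n - 1) * lp_norm 1 (y - x) / (real i + a)"
proof -
  let ?J = "PiE {..<n} (\<lambda>_::nat. UNIV::nat set)"
  have ia: "real i + a > 0" using a by simp
  have sx: "g x summable_on ?J" unfolding g_def
    by (rule abs_summable_summable) (rule Hfam(1)[OF a x])
  have sy: "g y summable_on ?J" unfolding g_def
    by (rule abs_summable_summable) (rule Hfam(1)[OF a y])
  have dif: "((\<lambda>j. g y j - g x j) has_sum (infsum (g y) ?J - infsum (g x) ?J)) ?J"
    by (rule has_sum_diff') (simp_all only: has_sum_infsum sx sy)
  have yx: "lp_mem 1 (y - x)"
  proof -
    have "summable (\<lambda>i. \<bar>y i\<bar> + \<bar>x i\<bar>)"
      using x y by (auto simp: l1_iff intro: summable_add)
    then show ?thesis unfolding l1_iff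
      by (rule summable_comparison_test'[where N=0]) auto
  qed
  define w where "w l k = (\<lambda>i. if k < l then \<bar>x i\<bar> else if k = l then \<bar>y i - x i\<bar> else \<bar>y i\<bar>)"
    for l k :: nat
  have wnn: "0 \<le> w l k i'" for l k i'
    by (simp add: w_def)
  have wsum: "summable (w l k)" for l k
    by (cases "k < l"; cases "k = l") (use x y yx in \<open>auto simp: w_def l1_iff\<close>)
  have wval: "suminf (w l k) = (if k < l then lp_norm 1 x else if k = l then lp_norm 1 (y - x) else lp_norm 1 y)"
    for l k
    by (cases "k < l"; cases "k = l") (use x y yx in \<open>auto simp: w_def l1_norm\<close>)
  have Ql: "((\<lambda>j. \<Prod>k<n. w l k (j k)) has_sum (\<Prod>k<n. suminf (w l k))) ?J" for l
    by (rule has_sum_PiE_prod[OF _ wsum]) (auto simp: w_def)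
  have Q: "((\<lambda>j. (\<Sum>l<n. \<Prod>k<n. w l k (j k)) / (real i + a)) has_sum
      ((\<Sum>l<n. \<Prod>k<n. suminf (w l k)) / (real i + a))) ?J"
    using has_sum_cmult_left[OF has_sum_sum_fin[OF finite_lessThan Ql], where c="inverse (real i + a)"]
    by (simp add: divide_inverse)
  have le: "norm (g y j - g x j) \<le> (\<Sum>l<n. \<Prod>k<n. w l k (j k)) / (real i + a)" for j
  proof -
    have d: "real i + a \<le> real i + (\<Sum>k<n. real (j k)) + a"
      using den_ge[where i=i and a=a and n=n and j=j] by auto
    have T: "\<bar>(\<Prod>k<n. y (j k)) - (\<Prod>k<n. x (j k))\<bar> \<le> (\<Sum>l<n. \<Prod>k<n. w l k (j k))"
      using tele[where n=n and b="\<lambda>k. y (j k)" and a="\<lambda>k. x (j k)"] unfolding w_def by simp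
    have nn: "0 \<le> (\<Sum>l<n. \<Prod>k<n. w l k (j k))"
      by (intro sum_nonneg prod_nonneg wnn)
    have "norm (g y j - g x j) = \<bar>(\<Prod>k<n. y (j k)) - (\<Prod>k<n. x (j k))\<bar> / (real i + (\<Sum>k<n. real (j k)) + a)"
      using d ia by (simp add: g_def diff_divide_distrib[symmetric])
    also have "\<dots> \<le> (\<Sum>l<n. \<Prod>k<n. w l k (j k)) / (real i + (\<Sum>k<n. real (j k)) + a)"
      using d ia T by (intro divide_right_mono) auto
    also have "\<dots> \<le> (\<Sum>l<n. \<Prod>k<n. w l k (j k)) / (real i + a)"
      using d ia nn by (intro divide_left_mono) auto
    finally show ?thesis .
  qed
  have Qnn: "0 \<le> (\<Sum>l<n. \<Prod>k<n. w l k (j k)) / (real i + a)" for j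
    using ia wnn by (simp add: sum_nonneg prod_nonneg)
  have le2: "norm (g y j - g x j) \<le> norm ((\<Sum>l<n. \<Prod>k<n. w l k (j k)) / (real i + a))" for j
    using le[of j] Qnn[of j] by (simp only: real_norm_def abs_of_nonneg)
  have Qs: "(\<lambda>j. norm ((\<Sum>l<n. \<Prod>k<n. w l k (j k)) / (real i + a))) summable_on ?J"
  proof -
    have "(\<lambda>j. norm ((\<Sum>l<n. \<Prod>k<n. w l k (j k)) / (real i + a))) = (\<lambda>j. (\<Sum>l<n. \<Prod>k<n. w l k (j k)) / (real i + a))"
      using ia wnn by (auto simp: fun_eq_iff abs_of_nonneg sum_nonneg prod_nonneg)
    then show ?thesis using Q by (auto simp: summable_on_def)
  qed
  have sd: "(\<lambda>j. norm (g y j - g x j)) summable_on ?J"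
    by (rule Infinite_Sum.abs_summable_on_comparison_test[OF Qs]) (rule le2)
  have "\<bar>infsum (g y) ?J - infsum (g x) ?J\<bar> = \<bar>infsum (\<lambda>j. g y j - g x j) ?J\<bar>"
    using dif infsumI by metis
  also have "\<dots> \<le> infsum (\<lambda>j. norm (g y j - g x j)) ?J"
    using norm_infsum_bound[OF sd] by simp
  also have "\<dots> \<le> infsum (\<lambda>j. (\<Sum>l<n. \<Prod>k<n. w l k (j k)) / (real i + a)) ?J"
    by (rule infsum_mono[OF sd]) (use Q le in \<open>auto simp: summable_on_def\<close>)
  also have "\<dots> = (\<Sum>l<n. \<Prod>k<n. suminf (w l k)) / (real i + a)"
    using Q infsumI by blast
  also have "\<dots> \<le> (\<Sum>l<n. lp_norm 1 (y - x) * R ^ (n - 1)) / (real i + a)"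
  proof (intro divide_right_mono sum_mono)
    fix l assume l: "l \<in> {..<n}"
    have "(\<Prod>k<n. suminf (w l k)) \<le> (\<Prod>k<n. (if k = l then lp_norm 1 (y - x) else R))"
      unfolding wval using Rx Ry lp_norm_nonneg[of 1 x] lp_norm_nonneg[of 1 y] lp_norm_nonneg[of 1 "y - x"]
      by (intro prod_mono) auto
    also have "\<dots> = lp_norm 1 (y - x) * R ^ (n - 1)"
      using l by (intro prod_if_bound) auto
    finally show "(\<Prod>k<n. suminf (w l k)) \<le> lp_norm 1 (y - x) * R ^ (n - 1)" .
  qed (use ia in auto)
  also have "\<dots> = real n * R ^ (n - 1) * lp_norm 1 (y - x) / (real i + a)"
    by simp
  finally show ?thesis .
qed



lemma sum_inv_powr:
  fixes a s :: real
  assumes a: "a > 0" and s: "s > 1"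
  shows "summable (\<lambda>i. inverse ((real i + a) powr s))"
proof -
  have "summable (\<lambda>n. real n powr (- s))"
    using s by (simp add: summable_real_powr_iff)
  then show ?thesis
  proof (rule summable_comparison_test'[where N=1])
    fix n :: nat assume n: "n \<ge> 1"
    have "real n powr s \<le> (real n + a) powr s"
      using a s by (intro powr_mono2) auto
    moreover have "0 < real n powr s" using n by simp
    ultimately have "inverse ((real n + a) powr s) \<le> inverse (real n powr s)"
      by (intro le_imp_inverse_le) auto
    then show "norm (inverse ((real n + a) powr s)) \<le> real n powr (- s)"
      by (simp add: powr_minus)
  qed
qed

lemma LP:
  fixes z :: "nat \<Rightarrow> real" and a p r c :: real
  assumes a: "a > 0" and p: "p > 0" and r: "r > 0" and rp: "r * p > 1" and c: "c \<ge> 0"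
    and zb: "\<And>i. \<bar>z i\<bar> \<le> c / (real i + a) powr r"
  shows "lp_mem p z"
    and "lp_norm p z \<le> c * (\<Sum>i. inverse ((real i + a) powr (r * p))) powr (1 / p)"
proof -
  define v where "v = (\<lambda>i. inverse ((real i + a) powr (r * p)))" 
  have vs: "summable v" unfolding v_def using sum_inv_powr[OF a rp] .
  have vnn: "0 \<le> v i" for i by (simp add: v_def)
  have b: "\<bar>z i\<bar> powr p \<le> c powr p * v i" for i
  proof -
    have "\<bar>z i\<bar> powr p \<le> (c / (real i + a) powr r) powr p"
      using zb[of i] p by (intro powr_mono2) auto
    also have "\<dots> = c powr p * v i"
      by (subst powr_divide, subst powr_powr, simp add: v_def divide_inverse)
    finally show ?thesis .
  qed
  have s1: "summable (\<lambda>i. c powr p * v i)" using vs by (rule summable_mult)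
  have zs: "summable (\<lambda>i. \<bar>z i\<bar> powr p)"
    by (rule summable_comparison_test'[OF s1, where N=0]) (use b in auto)
  then show "lp_mem p z" by (simp add: lp_mem_def)
  have "(\<Sum>i. \<bar>z i\<bar> powr p) \<le> (\<Sum>i. c powr p * v i)"
    by (rule suminf_le[OF b zs s1])
  also have "\<dots> = c powr p * suminf v" by (rule suminf_mult[OF vs])
  finally have le: "(\<Sum>i. \<bar>z i\<bar> powr p) \<le> c powr p * suminf v" .
  have "lp_norm p z \<le> (c powr p * suminf v) powr (1 / p)"
    unfolding lp_norm_def using p by (intro powr_mono2 le) (auto intro: suminf_nonneg zs)
  also have "\<dots> = c * suminf v powr (1 / p)"
    using p c by (simp add: powr_mult powr_powr)
  finally show "lp_norm p z \<le> c * (\<Sum>i. inverse ((real i + a) powr (r * p))) powr (1 / p)"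
    unfolding v_def .
qed

lemma S2:
  fixes a :: real
  assumes a: "a > 0"
  shows "(\<Sum>i. inverse ((real i + a) powr 2)) \<le> (if a < 1 then 1 / a\<^sup>2 + pi\<^sup>2 / 6 else pi\<^sup>2 / 6)"
proof -
  have z: "(\<lambda>n. 1 / (real n + 1)\<^sup>2) sums (pi\<^sup>2 / 6)" using inverse_squares_sums by (simp add: add.commute)
  define f where "f = (\<lambda>i. inverse ((real i + a) powr 2))" 
  have fs: "summable f" unfolding f_def using sum_inv_powr[OF a, of 2] by simp
  have f2: "f i = 1 / (real i + a)\<^sup>2" for i using a
    by (simp add: f_def divide_inverse)
  show ?thesis
  proof (cases "a < 1")
    case True
    have "(\<Sum>n. f (Suc n)) \<le> (\<Sum>n. 1 / (real n + 1)\<^sup>2)"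
    proof (rule suminf_le)
      fix n
      show "f (Suc n) \<le> 1 / (real n + 1)\<^sup>2"
        unfolding f2 using a by (intro divide_left_mono power_mono) auto
    qed (use fs z in \<open>auto simp: summable_Suc_iff sums_iff\<close>)
    then have "suminf f - f 0 \<le> pi\<^sup>2 / 6"
      using suminf_split_head[OF fs] z by (simp add: sums_iff)
    moreover have "f 0 = 1 / a\<^sup>2" by (simp add: f2)
    ultimately have "suminf f \<le> 1 / a\<^sup>2 + pi\<^sup>2 / 6" by simp
    then show ?thesis using True unfolding f_def by simp
  next
    case False
    have "suminf f \<le> (\<Sum>n. 1 / (real n + 1)\<^sup>2)"
    proof (rule suminf_le)
      fix n
      show "f n \<le> 1 / (real n + 1)\<^sup>2"
        unfolding f2 using False by (intro divide_left_mono power_mono) auto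
    qed (use fs z in \<open>auto simp: sums_iff\<close>)
    then have "suminf f \<le> pi\<^sup>2 / 6" using z by (simp add: sums_iff)
    then show ?thesis using False unfolding f_def by simp
  qed
qed

lemma root_subadd:
  assumes n: "n > 0" and s: "s \<ge> 0" and t: "t \<ge> 0"
  shows "root n (s + t) \<le> root n s + root n t"
proof -
  define A B where "A = root n s" and "B = root n t"
  have A: "A \<ge> 0" "A ^ n = s" using n s by (auto simp: A_def)
  have B: "B \<ge> 0" "B ^ n = t" using n t by (auto simp: B_def)
  have "A ^ n + B ^ n \<le> (A + B) ^ n"
  proof -
    obtain k where k: "n = Suc k" using n by (cases n) auto
    have "A ^ n + B ^ n = A * A ^ k + B * B ^ k" by (simp add: k)
    also have "\<dots> \<le> A * (A + B) ^ k + B * (A + B) ^ k"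
      using A B by (intro add_mono mult_left_mono power_mono) auto
    also have "\<dots> = (A + B) ^ n" by (simp add: k algebra_simps)
    finally show ?thesis .
  qed
  then have "s + t \<le> (A + B) ^ n" using A B by simp
  then have "root n (s + t) \<le> root n ((A + B) ^ n)" using n by simp
  also have "\<dots> = A + B" using n A B by (simp add: real_root_power_cancel)
  finally show ?thesis by (simp add: A_def B_def)
qed

lemma root_diff_nonneg:
  assumes n: "n > 0" and u: "u \<ge> 0" and v: "v \<ge> 0"
  shows "\<bar>root n u - root n v\<bar> \<le> root n \<bar>u - v\<bar>"
proof (cases "v \<le> u")
  case True
  have "root n u = root n (v + (u - v))" by simp
  also have "\<dots> \<le> root n v + root n (u - v)" using n v True by (intro root_subadd) auto
  finally show ?thesis using True n by (simp add: abs_if)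
next
  case False
  have "root n v = root n (u + (v - u))" by simp
  also have "\<dots> \<le> root n u + root n (v - u)" using n u False by (intro root_subadd) auto
  finally show ?thesis using False n by (simp add: abs_if)
qed

lemma root_diff:
  assumes n: "n > 0"
  shows "\<bar>root n u - root n v\<bar> \<le> 2 * root n \<bar>u - v\<bar>"
proof -
  have m: "root n \<bar>u\<bar> \<le> root n \<bar>u - v\<bar>" "root n \<bar>v\<bar> \<le> root n \<bar>u - v\<bar>"
    if "u * v \<le> 0" using that n
    by (auto simp: mult_le_0_iff)
  consider "u \<ge> 0" "v \<ge> 0" | "u \<le> 0" "v \<le> 0" | "u * v \<le> 0"
    by (metis linear mult_nonneg_nonpos mult_nonpos_nonneg)
  then show ?thesis
  proof cases
    case 1
    then show ?thesis using root_diff_nonneg[OF n, of u v] n by (smt (verit) real_root_ge_zero)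
  next
    case 2
    then have "\<bar>root n (-u) - root n (-v)\<bar> \<le> root n \<bar>(-u) - (-v)\<bar>"
      by (intro root_diff_nonneg[OF n]) auto
    then show ?thesis using n by (smt (verit) real_root_minus real_root_ge_zero)
  next
    case 3
    have "\<bar>root n u - root n v\<bar> \<le> \<bar>root n u\<bar> + \<bar>root n v\<bar>" by simp
    also have "\<dots> = root n \<bar>u\<bar> + root n \<bar>v\<bar>" using n by (simp add: real_root_abs)
    also have "\<dots> \<le> 2 * root n \<bar>u - v\<bar>" using m[OF 3] by simp
    finally show ?thesis .
  qed
qed

lemma cont_eps:
  fixes f :: "real \<Rightarrow> real"
  assumes "isCont f x0" "e > 0"
  shows "\<exists>d>0. \<forall>u. \<bar>u - x0\<bar> < d \<longrightarrow> \<bar>f u - f x0\<bar> < e"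
  using assms unfolding continuous_at_eps_delta dist_real_def by blast

lemma small_prod:
  fixes A e :: real
  assumes "A \<ge> 0" "e > 0"
  shows "\<exists>d>0. \<forall>t. 0 \<le> t \<and> t < d \<longrightarrow> A * t < e"
proof (intro exI[of _ "e / (A + 1)"] conjI allI impI)
  show "0 < e / (A + 1)" using assms by simp
  fix t assume t: "0 \<le> t \<and> t < e / (A + 1)"
  have "A * t \<le> (A + 1) * t" using t by (simp add: mult_right_mono)
  also have "\<dots> < (A + 1) * (e / (A + 1))" using t assms by (intro mult_strict_left_mono) auto
  also have "\<dots> = e" using assms by simp
  finally show "A * t < e" .
qed

lemma l1_diff: "lp_mem 1 x \<Longrightarrow> lp_mem 1 y \<Longrightarrow> lp_mem 1 (y - x)"
proof -
  assume x: "lp_mem 1 x" and y: "lp_mem 1 y"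
  have "summable (\<lambda>i. \<bar>y i\<bar> + \<bar>x i\<bar>)"
    using x y by (auto simp: l1_iff intro: summable_add)
  then show ?thesis unfolding l1_iff
    by (rule summable_comparison_test'[where N=0]) auto
qed

lemma l1_tri:
  assumes x: "lp_mem 1 x" and y: "lp_mem 1 y"
  shows "lp_norm 1 y \<le> lp_norm 1 x + lp_norm 1 (y - x)"
    and "lp_norm 1 x \<le> lp_norm 1 y + lp_norm 1 (y - x)"
proof -
  have yx: "lp_mem 1 (y - x)" by (rule l1_diff[OF x y])
  have sx: "summable (\<lambda>i. \<bar>x i\<bar>)" and sy: "summable (\<lambda>i. \<bar>y i\<bar>)"
    and sd: "summable (\<lambda>i. \<bar>y i - x i\<bar>)"
    using x y yx by (auto simp: l1_iff)
  have "(\<Sum>i. \<bar>y i\<bar>) \<le> (\<Sum>i. \<bar>x i\<bar> + \<bar>y i - x i\<bar>)"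
    by (rule suminf_le) (auto intro: summable_add sx sd sy)
  also have "\<dots> = (\<Sum>i. \<bar>x i\<bar>) + (\<Sum>i. \<bar>y i - x i\<bar>)"
    by (rule suminf_add[OF sx sd, symmetric])
  finally show "lp_norm 1 y \<le> lp_norm 1 x + lp_norm 1 (y - x)"
    using x y yx by (simp add: l1_norm)
  have "(\<Sum>i. \<bar>x i\<bar>) \<le> (\<Sum>i. \<bar>y i\<bar> + \<bar>y i - x i\<bar>)"
    by (rule suminf_le) (auto intro: summable_add sy sd sx)
  also have "\<dots> = (\<Sum>i. \<bar>y i\<bar>) + (\<Sum>i. \<bar>y i - x i\<bar>)"
    by (rule suminf_add[OF sy sd, symmetric])
  finally show "lp_norm 1 x \<le> lp_norm 1 y + lp_norm 1 (y - x)"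
    using x y yx by (simp add: l1_norm)
qed

lemma l1_pos:
  assumes x: "lp_mem 1 x" and nz: "x \<noteq> (\<lambda>_. 0)"
  shows "lp_norm 1 x > 0"
proof -
  obtain i where "x i \<noteq> 0" using nz by auto
  then have "0 < (\<Sum>i. \<bar>x i\<bar>)"
    using x by (intro suminf_pos2[where i=i]) (auto simp: l1_iff)
  then show ?thesis using x by (simp add: l1_norm)
qed

lemma l1_zero: "lp_norm 1 (\<lambda>_. 0) = 0"
  by (simp add: lp_norm_def)

lemma l1_scale:
  assumes x: "lp_mem 1 x" and t: "t > 0"
  shows "lp_mem 1 (\<lambda>i. t * x i)" and "lp_norm 1 (\<lambda>i. t * x i) = t * lp_norm 1 x"
proof -
  have s: "summable (\<lambda>i. t * \<bar>x i\<bar>)" using x by (simp add: l1_iff summable_mult)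
  show m: "lp_mem 1 (\<lambda>i. t * x i)" using s t by (simp add: l1_iff abs_mult)
  show "lp_norm 1 (\<lambda>i. t * x i) = t * lp_norm 1 x"
    using m x t by (simp add: l1_norm abs_mult suminf_mult l1_iff)
qed

lemma HB:
  assumes a: "a > 0" and x: "lp_mem 1 x"
  shows "\<bar>Hinf m a x i\<bar> \<le> lp_norm 1 x ^ (m - 1) / (real i + a)"
  unfolding Hinf_def using Hfam(2)[OF a x, of "m - 1" i] .

lemma HD:
  assumes a: "a > 0" and x: "lp_mem 1 x" and y: "lp_mem 1 y"
    and Rx: "lp_norm 1 x \<le> R" and Ry: "lp_norm 1 y \<le> R"
  shows "\<bar>Hinf m a y i - Hinf m a x i\<bar> \<le> real (m - 1) * R ^ (m - 1 - 1) * lp_norm 1 (y - x) / (real i + a)"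
  unfolding Hinf_def using Hdiff[OF a x y Rx Ry, of "m - 1" i] .

lemma H_scale:
  shows "Hinf m a (\<lambda>i. t * x i) i = t ^ (m - 1) * Hinf m a x i"
proof -
  have e: "(\<lambda>j. (\<Prod>k<m - 1. t * x (j k)) / (real i + (\<Sum>k<m - 1. real (j k)) + a))
      = (\<lambda>j. t ^ (m - 1) * ((\<Prod>k<m - 1. x (j k)) / (real i + (\<Sum>k<m - 1. real (j k)) + a)))"
    by (rule ext) (simp add: prod.distrib)
  show ?thesis unfolding Hinf_def
    by (subst e) (rule infsum_cmult_right')
qed



lemma FB:
  assumes a: "a > 0" and m: "m \<ge> 2" and x: "lp_mem 1 x"
  shows "\<bar>Finf m a x i\<bar> \<le> lp_norm 1 x / (real i + a) powr (1 / real (m - 1))"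
proof -
  have n: "0 < m - 1" using m by simp
  have N: "0 \<le> lp_norm 1 x" by (rule lp_norm_nonneg)
  have "\<bar>Finf m a x i\<bar> = root (m - 1) \<bar>Hinf m a x i\<bar>"
    using n by (simp add: Finf_def real_root_abs)
  also have "\<dots> \<le> root (m - 1) (lp_norm 1 x ^ (m - 1) / (real i + a))"
    using n HB[OF a x, of m i] by simp
  also have "\<dots> = root (m - 1) (lp_norm 1 x ^ (m - 1)) / root (m - 1) (real i + a)"
    by (rule real_root_divide)
  also have "\<dots> = lp_norm 1 x / (real i + a) powr (1 / real (m - 1))"
    using n N a by (simp only: real_root_power_cancel root_powr_inverse[of "m - 1" "real i + a"])
  finally show ?thesis .
qed

lemma F_lp:
  assumes a: "a > 0" and m: "m \<ge> 2" and x: "lp_mem 1 x" and p: "real m - 1 < p"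
  shows "lp_mem p (Finf m a x)"
    and "lp_norm p (Finf m a x) \<le> lp_norm 1 x *
          (\<Sum>i. inverse ((real i + a) powr (1 / real (m - 1) * p))) powr (1 / p)"
proof -
  have n: "real (m - 1) = real m - 1" using m by simp
  have n0: "real m - 1 > 0" using m by simp
  have rp: "1 / real (m - 1) * p > 1" using p n0 n by (simp add: field_simps)
  have pp: "p > 0" using p n0 by simp
  have r: "1 / real (m - 1) > 0" using n n0 by simp
  note L = LP[OF a pp r rp lp_norm_nonneg FB[OF a m x]]
  show "lp_mem p (Finf m a x)" by (rule L(1))
  show "lp_norm p (Finf m a x) \<le> lp_norm 1 x *
          (\<Sum>i. inverse ((real i + a) powr (1 / real (m - 1) * p))) powr (1 / p)" by (rule L(2))
qed

lemma F_cont: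
  assumes a: "a > 0" and m: "m \<ge> 2" and p: "real m - 1 < p"
  shows "continuous_op_l1_lp p (Finf m a)"
  unfolding continuous_op_l1_lp_def
proof (intro allI impI)
  fix x :: "nat \<Rightarrow> real" and e :: real
  assume x: "lp_mem 1 x" and e: "0 < e"
  define n where "n = m - 1"
  have n0: "0 < n" using m by (simp add: n_def)
  have nr: "real n = real m - 1" using m by (simp add: n_def)
  have pp: "p > 0" using p m by simp
  have r: "1 / real n > 0" using n0 by simp
  have rp: "1 / real n * p > 1" using p n0 nr by (simp add: field_simps)
  define Zp where "Zp = (\<Sum>i. inverse ((real i + a) powr (1 / real n * p))) powr (1 / p)"
  define R0 where "R0 = lp_norm 1 x + 1"
  define K where "K = real n * R0 ^ (n - 1)"
  have R0: "R0 \<ge> 0" using lp_norm_nonneg[of 1 x] by (simp add: R0_def)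
  have K: "K \<ge> 0" using R0 by (simp add: K_def)
  define \<phi> where "\<phi> t = 2 * root n (K * t) * Zp" for t
  have ic: "isCont \<phi> 0" unfolding \<phi>_def by (intro continuous_intros)
  obtain d where d: "d > 0" "\<And>u. \<bar>u - 0\<bar> < d \<Longrightarrow> \<bar>\<phi> u - \<phi> 0\<bar> < e"
    using cont_eps[OF ic e] by blast
  have phi0: "\<phi> 0 = 0" by (simp add: \<phi>_def)
  show "\<exists>d>0. \<forall>y. lp_mem 1 y \<longrightarrow> lp_norm 1 (y - x) < d \<longrightarrow> lp_norm p (Finf m a y - Finf m a x) < e"
  proof (intro exI[of _ "min 1 d"] conjI allI impI)
    show "0 < min 1 d" using d by simp
    fix y assume y: "lp_mem 1 y" and yd: "lp_norm 1 (y - x) < min 1 d"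
    define t where "t = lp_norm 1 (y - x)"
    have t0: "t \<ge> 0" by (simp add: t_def lp_norm_nonneg)
    have Rx: "lp_norm 1 x \<le> R0" by (simp add: R0_def)
    have Ry: "lp_norm 1 y \<le> R0" using l1_tri(1)[OF x y] yd by (simp add: R0_def)
    have bnd: "\<bar>(Finf m a y - Finf m a x) i\<bar> \<le> (2 * root n (K * t)) / (real i + a) powr (1 / real n)" for i
    proof -
      have "\<bar>(Finf m a y - Finf m a x) i\<bar> = \<bar>root n (Hinf m a y i) - root n (Hinf m a x i)\<bar>"
        by (simp add: Finf_def n_def)
      also have "\<dots> \<le> 2 * root n \<bar>Hinf m a y i - Hinf m a x i\<bar>"
        by (rule root_diff[OF n0])
      also have "\<dots> \<le> 2 * root n (K * t / (real i + a))"
        using HD[OF a x y Rx Ry, of m i] n0 by (simp add: K_def t_def n_def mult.assoc)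
      also have "\<dots> = (2 * root n (K * t)) / (real i + a) powr (1 / real n)"
        using n0 a by (simp add: real_root_divide root_powr_inverse)
      finally show ?thesis .
    qed
    have c0: "0 \<le> 2 * root n (K * t)" using K t0 by (simp add: real_root_ge_zero)
    have "lp_norm p (Finf m a y - Finf m a x) \<le> 2 * root n (K * t) * Zp"
      unfolding Zp_def using LP(2)[OF a pp r rp c0 bnd] .
    also have "\<dots> = \<phi> t" by (simp add: \<phi>_def)
    also have "\<dots> < e" using d(2)[of t] t0 yd phi0 by (simp add: t_def)
    finally show "lp_norm p (Finf m a y - Finf m a x) < e" .
  qed
qed

lemma Npow:
  assumes N: "N > (0::real)" and m: "m \<ge> 2"
  shows "N powr (2 - real m) * N ^ (m - 1) = N"
proof -
  have "N ^ (m - 1) = N powr real (m - 1)" using N by (simp add: powr_realpow)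
  then have "N powr (2 - real m) * N ^ (m - 1) = N powr (2 - real m + real (m - 1))"
    by (simp add: powr_add)
  also have "2 - real m + real (m - 1) = 1" using m by simp
  finally show ?thesis using N by simp
qed

lemma TB:
  assumes a: "a > 0" and m: "m \<ge> 2" and x: "lp_mem 1 x"
  shows "\<bar>Tinf m a x i\<bar> \<le> lp_norm 1 x / (real i + a) powr 1"
proof (cases "x = (\<lambda>_. 0)")
  case True
  then show ?thesis using lp_norm_nonneg[of 1 x] a by (simp add: Tinf_def)
next
  case False
  have N: "lp_norm 1 x > 0" by (rule l1_pos[OF x False])
  have "\<bar>Tinf m a x i\<bar> = lp_norm 1 x powr (2 - real m) * \<bar>Hinf m a x i\<bar>"
    using False by (simp add: Tinf_def abs_mult)
  also have "\<dots> \<le> lp_norm 1 x powr (2 - real m) * (lp_norm 1 x ^ (m - 1) / (real i + a))"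
    by (intro mult_left_mono HB[OF a x]) simp
  also have "\<dots> = (lp_norm 1 x powr (2 - real m) * lp_norm 1 x ^ (m - 1)) / (real i + a)"
    by simp
  also have "\<dots> = lp_norm 1 x / (real i + a) powr 1"
    using Npow[OF N m] a by simp
  finally show ?thesis .
qed

lemma T_lp:
  assumes a: "a > 0" and m: "m \<ge> 2" and x: "lp_mem 1 x" and p: "1 < p"
  shows "lp_mem p (Tinf m a x)"
    and "lp_norm p (Tinf m a x) \<le> lp_norm 1 x *
          (\<Sum>i. inverse ((real i + a) powr (1 * p))) powr (1 / p)"
proof -
  have pp: "p > 0" using p by simp
  have rp: "1 * p > 1" using p by simp
  note L = LP[OF a pp zero_less_one rp lp_norm_nonneg TB[OF a m x]]
  show "lp_mem p (Tinf m a x)" by (rule L(1))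
  show "lp_norm p (Tinf m a x) \<le> lp_norm 1 x *
          (\<Sum>i. inverse ((real i + a) powr (1 * p))) powr (1 / p)" by (rule L(2))
qed

lemma T_cont:
  assumes a: "a > 0" and m: "m \<ge> 2" and p: "1 < p"
  shows "continuous_op_l1_lp p (Tinf m a)"
  unfolding continuous_op_l1_lp_def
proof (intro allI impI)
  fix x :: "nat \<Rightarrow> real" and e :: real
  assume x: "lp_mem 1 x" and e: "0 < e"
  have pp: "p > 0" using p by simp
  have rp: "1 * p > 1" using p by simp
  define Z where "Z = (\<Sum>i. inverse ((real i + a) powr (1 * p))) powr (1 / p)"
  have Z0: "Z \<ge> 0" by (simp add: Z_def)
  show "\<exists>d>0. \<forall>y. lp_mem 1 y \<longrightarrow> lp_norm 1 (y - x) < d \<longrightarrow> lp_norm p (Tinf m a y - Tinf m a x) < e"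
  proof (cases "x = (\<lambda>_. 0)")
    case True
    obtain d where d: "d > 0" "\<And>t. 0 \<le> t \<and> t < d \<Longrightarrow> Z * t < e"
      using small_prod[OF Z0 e] by blast
    show ?thesis
    proof (intro exI[of _ d] conjI allI impI)
      show "0 < d" by (rule d(1))
      fix y assume y: "lp_mem 1 y" and yd: "lp_norm 1 (y - x) < d"
      have yx: "y - x = y" using True by (simp add: fun_eq_iff)
      have Tx: "Tinf m a x = (\<lambda>_. 0)" using True by (simp add: Tinf_def)
      have "Tinf m a y - Tinf m a x = Tinf m a y" by (simp add: Tx fun_eq_iff)
      then have "lp_norm p (Tinf m a y - Tinf m a x) \<le> lp_norm 1 y * Z"
        using T_lp(2)[OF a m y p] by (simp add: Z_def)
      also have "\<dots> = Z * lp_norm 1 y" by simp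
      also have "\<dots> < e" using d(2)[of "lp_norm 1 y"] yd yx lp_norm_nonneg[of 1 y] by simp
      finally show "lp_norm p (Tinf m a y - Tinf m a x) < e" .
    qed
  next
    case False
    define Nx where "Nx = lp_norm 1 x"
    have Nx: "Nx > 0" unfolding Nx_def by (rule l1_pos[OF x False])
    define h where "h u = u powr (2 - real m)" for u :: real
    define n where "n = m - 1"
    define R0 where "R0 = Nx + 1"
    define K where "K = real n * R0 ^ (n - 1)"
    define B where "B = Nx ^ n"
    define h2 where "h2 = h (Nx / 2)"
    have R0: "R0 \<ge> 0" using Nx by (simp add: R0_def)
    have K: "K \<ge> 0" using R0 by (simp add: K_def)
    have B: "B \<ge> 0" using Nx by (simp add: B_def)
    have h20: "h2 \<ge> 0" by (simp add: h2_def h_def)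
    obtain d2 where d2: "d2 > 0" "\<And>t. 0 \<le> t \<and> t < d2 \<Longrightarrow> (Z * h2 * K) * t < e / 2"
      using small_prod[of "Z * h2 * K" "e / 2"] Z0 h20 K e by auto
    have ic: "isCont h Nx" unfolding h_def using Nx by (intro continuous_intros) auto
    have e1: "e / 2 / (Z * B + 1) > 0" using e Z0 B by (simp add: add_nonneg_pos)
    obtain d1 where d1: "d1 > 0" "\<And>u. \<bar>u - Nx\<bar> < d1 \<Longrightarrow> \<bar>h u - h Nx\<bar> < e / 2 / (Z * B + 1)"
      using cont_eps[OF ic e1] by blast
    show ?thesis
    proof (intro exI[of _ "min (min 1 (Nx / 2)) (min d1 d2)"] conjI allI impI)
      show "0 < min (min 1 (Nx / 2)) (min d1 d2)" using Nx d1 d2 by simp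
      fix y assume y: "lp_mem 1 y" and yd: "lp_norm 1 (y - x) < min (min 1 (Nx / 2)) (min d1 d2)"
      define t where "t = lp_norm 1 (y - x)"
      define Ny where "Ny = lp_norm 1 y"
      have t0: "t \<ge> 0" by (simp add: t_def lp_norm_nonneg)
      have tr1: "Ny \<le> Nx + t" and tr2: "Nx \<le> Ny + t"
        using l1_tri[OF x y] by (simp_all add: Ny_def Nx_def t_def)
      have tl: "t < 1" "t < Nx / 2" "t < d1" "t < d2" using yd by (simp_all add: t_def)
      have Nyh: "Nx / 2 \<le> Ny" using tr2 tl by simp
      have Ny0: "Ny > 0" using Nyh Nx by simp
      have ynz: "y \<noteq> (\<lambda>_. 0)" using Ny0 l1_zero by (auto simp: Ny_def)
      have Rx: "lp_norm 1 x \<le> R0" by (simp add: R0_def Nx_def)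
      have Ry: "lp_norm 1 y \<le> R0" using tr1 tl by (simp add: R0_def Ny_def)
      have hNy: "h Ny \<le> h2" unfolding h2_def h_def
        using m Nx Nyh by (intro powr_mono2') auto
      have hNy0: "h Ny \<ge> 0" by (simp add: h_def)
      have hd: "\<bar>h Ny - h Nx\<bar> < e / 2 / (Z * B + 1)"
        using d1(2)[of Ny] tr1 tr2 tl by simp
      define c where "c = h2 * K * t + \<bar>h Ny - h Nx\<bar> * B"
      have c0: "c \<ge> 0" using h20 K t0 B by (simp add: c_def)
      have bnd: "\<bar>(Tinf m a y - Tinf m a x) i\<bar> \<le> c / (real i + a) powr 1" for i
      proof -
        have ia: "real i + a > 0" using a by simp
        have HD': "\<bar>Hinf m a y i - Hinf m a x i\<bar> \<le> K * t / (real i + a)"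
          using HD[OF a x y Rx Ry, of m i] by (simp add: K_def n_def t_def)
        have HB': "\<bar>Hinf m a x i\<bar> \<le> B / (real i + a)"
          using HB[OF a x, of m i] by (simp add: B_def n_def Nx_def)
        have "(Tinf m a y - Tinf m a x) i = h Ny * Hinf m a y i - h Nx * Hinf m a x i"
          using ynz False by (simp add: Tinf_def h_def Ny_def Nx_def)
        also have "\<dots> = h Ny * (Hinf m a y i - Hinf m a x i) + (h Ny - h Nx) * Hinf m a x i"
          by (simp add: algebra_simps)
        finally have "\<bar>(Tinf m a y - Tinf m a x) i\<bar> \<le> h Ny * \<bar>Hinf m a y i - Hinf m a x i\<bar> + \<bar>h Ny - h Nx\<bar> * \<bar>Hinf m a x i\<bar>"
          using hNy0 by (simp add: abs_mult) (metis abs_triangle_ineq abs_mult abs_of_nonneg hNy0)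
        also have "\<dots> \<le> h2 * (K * t / (real i + a)) + \<bar>h Ny - h Nx\<bar> * (B / (real i + a))"
          using hNy hNy0 HD' HB' by (intro add_mono mult_mono) auto
        also have "\<dots> = c / (real i + a) powr 1"
          using ia by (simp add: c_def add_divide_distrib)
        finally show ?thesis .
      qed
      have "lp_norm p (Tinf m a y - Tinf m a x) \<le> c * Z"
        unfolding Z_def using LP(2)[OF a pp zero_less_one rp c0 bnd] .
      also have "\<dots> = (Z * h2 * K) * t + Z * B * \<bar>h Ny - h Nx\<bar>"
        by (simp add: c_def algebra_simps)
      also have "\<dots> < e / 2 + e / 2"
      proof (rule add_less_le_mono)
        show "Z * h2 * K * t < e / 2" using d2(2)[of t] t0 tl by simp
        have "Z * B * \<bar>h Ny - h Nx\<bar> \<le> (Z * B + 1) * \<bar>h Ny - h Nx\<bar>"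
          by (simp add: mult_right_mono)
        also have "\<dots> \<le> (Z * B + 1) * (e / 2 / (Z * B + 1))"
          using hd Z0 B by (intro mult_left_mono) auto
        also have "\<dots> = e / 2"
        proof -
          have pos: "Z * B + 1 \<noteq> 0" using Z0 B by (smt (verit) mult_nonneg_nonneg)
          then show ?thesis by (simp add: field_simps)
        qed
        finally show "Z * B * \<bar>h Ny - h Nx\<bar> \<le> e / 2" .
      qed
      finally show "lp_norm p (Tinf m a y - Tinf m a x) < e" by simp
    qed
  qed
qed

lemma F_hom:
  assumes m: "m \<ge> 2"
  shows "pos_homogeneous_on_l1 (Finf m a)"
  unfolding pos_homogeneous_on_l1_def
proof (intro allI impI ext)
  fix t :: real and x :: "nat \<Rightarrow> real" and i
  assume t: "t > 0" and x: "lp_mem 1 x"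
  have n: "0 < m - 1" using m by simp
  have "Finf m a (\<lambda>i. t * x i) i = root (m - 1) (t ^ (m - 1) * Hinf m a x i)"
    by (simp add: Finf_def H_scale)
  also have "\<dots> = t * Finf m a x i"
    using n t by (simp add: real_root_mult real_root_power_cancel Finf_def)
  finally show "Finf m a (\<lambda>i. t * x i) i = t * Finf m a x i" .
qed

lemma T_hom:
  assumes m: "m \<ge> 2"
  shows "pos_homogeneous_on_l1 (Tinf m a)"
  unfolding pos_homogeneous_on_l1_def
proof (intro allI impI)
  fix t :: real and x :: "nat \<Rightarrow> real"
  assume t: "t > 0" and x: "lp_mem 1 x"
  show "Tinf m a (\<lambda>i. t * x i) = (\<lambda>i. t * Tinf m a x i)"
  proof (cases "x = (\<lambda>_. 0)")
    case True
    then show ?thesis by (simp add: Tinf_def)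
  next
    case False
    have tx: "(\<lambda>i. t * x i) \<noteq> (\<lambda>_. 0)" using False t by (auto simp: fun_eq_iff)
    have N: "lp_norm 1 (\<lambda>i. t * x i) = t * lp_norm 1 x" by (rule l1_scale(2)[OF x t])
    have Nx: "lp_norm 1 x > 0" by (rule l1_pos[OF x False])
    show ?thesis
    proof (rule ext)
      fix i
      have "Tinf m a (\<lambda>i. t * x i) i = (t * lp_norm 1 x) powr (2 - real m) * (t ^ (m - 1) * Hinf m a x i)"
        using tx by (simp add: Tinf_def N H_scale)
      also have "\<dots> = (t powr (2 - real m) * t ^ (m - 1)) * (lp_norm 1 x powr (2 - real m) * Hinf m a x i)"
        by (simp add: powr_mult)
      also have "\<dots> = t * Tinf m a x i"
        using Npow[OF t m] False by (simp add: Tinf_def)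
      finally show "Tinf m a (\<lambda>i. t * x i) i = t * Tinf m a x i" .
    qed
  qed
qed

lemma unit_ex: "lp_mem 1 (\<lambda>i. if i = 0 then 1 else 0) \<and> lp_norm 1 (\<lambda>i. if i = 0 then 1 else 0) = 1"
proof -
  have s: "(\<lambda>i::nat. if i = 0 then (1::real) else 0) sums 1"
    using sums_single[of 0 "\<lambda>_. (1::real)"] by simp
  have e: "(\<lambda>i::nat. \<bar>if i = 0 then (1::real) else 0\<bar>) = (\<lambda>i. if i = 0 then 1 else 0)"
    by (auto simp: fun_eq_iff)
  have m: "lp_mem 1 (\<lambda>i. if i = 0 then (1::real) else 0)"
    unfolding l1_iff e using s by (auto simp: sums_iff)
  then show ?thesis using s by (simp add: l1_norm e sums_iff)
qed

lemma F_sup: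
  assumes a: "a > 0" and m: "m \<ge> 2" and x: "lp_mem 1 x" and N1: "lp_norm 1 x = 1"
  shows "lp_norm (2 * (real m - 1)) (Finf m a x) \<le> Kconst m a"
proof -
  have n: "real (m - 1) = real m - 1" using m by simp
  have n0: "real m - 1 > 0" using m by simp
  have p: "real m - 1 < 2 * (real m - 1)" using n0 by simp
  have two: "1 / real (m - 1) * (2 * (real m - 1)) = 2" using n n0 by (simp add: field_simps)
  define S where "S = (\<Sum>i. inverse ((real i + a) powr 2))"
  have S0: "S \<ge> 0" unfolding S_def
    by (intro suminf_nonneg) (use sum_inv_powr[OF a, of 2] in auto)
  have "lp_norm (2 * (real m - 1)) (Finf m a x) \<le> S powr (1 / (2 * (real m - 1)))"
    using F_lp(2)[OF a m x p] unfolding N1 two S_def by (simp only: mult_1)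
  also have "\<dots> \<le> (if a < 1 then 1 / a\<^sup>2 + pi\<^sup>2 / 6 else pi\<^sup>2 / 6) powr (1 / (2 * (real m - 1)))"
    using S2[OF a] S0 n0 unfolding S_def by (intro powr_mono2) auto
  also have "\<dots> = Kconst m a" by (simp add: Kconst_def)
  finally show ?thesis .
qed

lemma T_sup:
  assumes a: "a > 0" and m: "m \<ge> 2" and x: "lp_mem 1 x" and N1: "lp_norm 1 x = 1"
  shows "lp_norm 2 (Tinf m a x) \<le> Cconst a"
proof -
  define S where "S = (\<Sum>i. inverse ((real i + a) powr 2))"
  have S0: "S \<ge> 0" unfolding S_def
    by (intro suminf_nonneg) (use sum_inv_powr[OF a, of 2] in auto)
  have "lp_norm 2 (Tinf m a x) \<le> S powr (1 / 2)"
    using T_lp(2)[OF a m x, of 2] by (simp add: N1 S_def)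
  also have "\<dots> \<le> (if a < 1 then 1 / a\<^sup>2 + pi\<^sup>2 / 6 else pi\<^sup>2 / 6) powr (1 / 2)"
    using S2[OF a] S0 unfolding S_def by (intro powr_mono2) auto
  also have "\<dots> = Cconst a"
    by (simp add: Cconst_def powr_half_sqrt real_sqrt_divide)
  finally show ?thesis .
qed

theorem theorem3p2:
  fixes m :: nat and a :: real
  assumes "m \<ge> 2" and "a > 0"
  shows "(even m \<longrightarrow>
            (\<forall>p. real m - 1 < p \<longrightarrow>
               (\<forall>x. lp_mem 1 x \<longrightarrow> lp_mem p (Finf m a x)) \<and>
               bounded_op_l1_lp p (Finf m a) \<and>
               continuous_op_l1_lp p (Finf m a) \<and>
               pos_homogeneous_on_l1 (Finf m a)) \<and>
            (SUP x\<in>{x. lp_mem 1 x \<and> lp_norm 1 x = 1}. lp_norm (2 * (real m - 1)) (Finf m a x))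
               \<le> Kconst m a) \<and>
         ((\<forall>p. 1 < p \<longrightarrow>
               (\<forall>x. lp_mem 1 x \<longrightarrow> lp_mem p (Tinf m a x)) \<and>
               bounded_op_l1_lp p (Tinf m a) \<and>
               continuous_op_l1_lp p (Tinf m a) \<and>
               pos_homogeneous_on_l1 (Tinf m a)) \<and>
            (SUP x\<in>{x. lp_mem 1 x \<and> lp_norm 1 x = 1}. lp_norm 2 (Tinf m a x))
               \<le> Cconst a)"
proof -
  note m = assms(1) and a = assms(2)
  have ne: "{x. lp_mem 1 x \<and> lp_norm 1 x = 1} \<noteq> {}"
    using unit_ex by blast
  have Fpart: "(\<forall>x. lp_mem 1 x \<longrightarrow> lp_mem p (Finf m a x)) \<and>
               bounded_op_l1_lp p (Finf m a) \<and>
               continuous_op_l1_lp p (Finf m a) \<and>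
               pos_homogeneous_on_l1 (Finf m a)" if p: "real m - 1 < p" for p
  proof (intro conjI allI impI)
    show "lp_mem p (Finf m a x)" if "lp_mem 1 x" for x using F_lp(1)[OF a m that p] .
    define Z where "Z = (\<Sum>i. inverse ((real i + a) powr (1 / real (m - 1) * p))) powr (1 / p)"
    have Z0: "Z \<ge> 0" by (simp add: Z_def)
    show "bounded_op_l1_lp p (Finf m a)"
      unfolding bounded_op_l1_lp_def
    proof (intro exI[of _ "Z + 1"] conjI allI impI)
      show "0 < Z + 1" using Z0 by simp
      fix x assume x: "lp_mem 1 x"
      have "lp_norm p (Finf m a x) \<le> lp_norm 1 x * Z" using F_lp(2)[OF a m x p] by (simp add: Z_def)
      also have "\<dots> \<le> (Z + 1) * lp_norm 1 x" using lp_norm_nonneg[of 1 x] by (simp add: algebra_simps)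
      finally show "lp_norm p (Finf m a x) \<le> (Z + 1) * lp_norm 1 x" .
    qed
    show "continuous_op_l1_lp p (Finf m a)" by (rule F_cont[OF a m p])
    show "pos_homogeneous_on_l1 (Finf m a)" by (rule F_hom[OF m])
  qed
  have Tpart: "(\<forall>x. lp_mem 1 x \<longrightarrow> lp_mem p (Tinf m a x)) \<and>
               bounded_op_l1_lp p (Tinf m a) \<and>
               continuous_op_l1_lp p (Tinf m a) \<and>
               pos_homogeneous_on_l1 (Tinf m a)" if p: "1 < p" for p
  proof (intro conjI allI impI)
    show "lp_mem p (Tinf m a x)" if "lp_mem 1 x" for x using T_lp(1)[OF a m that p] .
    define Z where "Z = (\<Sum>i. inverse ((real i + a) powr (1 * p))) powr (1 / p)"
    have Z0: "Z \<ge> 0" by (simp add: Z_def)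
    show "bounded_op_l1_lp p (Tinf m a)"
      unfolding bounded_op_l1_lp_def
    proof (intro exI[of _ "Z + 1"] conjI allI impI)
      show "0 < Z + 1" using Z0 by simp
      fix x assume x: "lp_mem 1 x"
      have "lp_norm p (Tinf m a x) \<le> lp_norm 1 x * Z" using T_lp(2)[OF a m x p] by (simp add: Z_def)
      also have "\<dots> \<le> (Z + 1) * lp_norm 1 x" using lp_norm_nonneg[of 1 x] by (simp add: algebra_simps)
      finally show "lp_norm p (Tinf m a x) \<le> (Z + 1) * lp_norm 1 x" .
    qed
    show "continuous_op_l1_lp p (Tinf m a)" by (rule T_cont[OF a m p])
    show "pos_homogeneous_on_l1 (Tinf m a)" by (rule T_hom[OF m])
  qed
  have Fs: "(SUP x\<in>{x. lp_mem 1 x \<and> lp_norm 1 x = 1}. lp_norm (2 * (real m - 1)) (Finf m a x)) \<le> Kconst m a"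
    by (rule cSUP_least[OF ne]) (use F_sup[OF a m] in auto)
  have Ts: "(SUP x\<in>{x. lp_mem 1 x \<and> lp_norm 1 x = 1}. lp_norm 2 (Tinf m a x)) \<le> Cconst a"
    by (rule cSUP_least[OF ne]) (use T_sup[OF a m] in auto)
  show ?thesis using Fpart Tpart Fs Ts by blast
qed


end
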